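(* Under the standing assumptions, $G$ does not contain a vertex $v$ of degree $8$ together with pairwise distinct neighbours $u,w,y,z,t$ of $v$ and a vertex $x\notin\{v,u,w,y,z,t\}$ such that $d(u)=2$, $d(w)=d(z)=3$, $x$ is adjacent to both $u$ and $w$, and $wy,zt\in E(G)$.
   Context: Standing assumptions: A total $9$-coloring of a graph is an assignment of colors from $\{1,\dots,9\}$ to the vertices and edges such that adjacent vertices, edges sharing an endpoint, and a vertex and an incident edge receive different colors. A $4$-fan is the graph on six vertices $c,u_1,\dots,u_5$ with edges $cu_j$ ($1\le j\le5$) and $u_ju_{j+1}$ ($1\le j\le4$). $G$ is a minimal counterexample: $G$ is a simple planar graph with maximum degree $8$, containing no subgraph isomorphic to a $4$-fan, that has no total $9$-coloring, and such that every simple planar graph $H$ with maximum degree at most $8$, no subgraph isomorphic to a $4$-fan, and $|V(H)|+|E(H)|<|V(G)|+|E(G)|$ has a total $9$-coloring. $d(\cdot)$ denotes degree in $G$. *)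

theory Defs
  imports "HOL-Analysis.Analysis"
begin

definition simple_graph :: "'a set \<Rightarrow> 'a set set \<Rightarrow> bool" where
  "simple_graph V E \<longleftrightarrow> finite V \<and> (\<forall>e\<in>E. e \<subseteq> V \<and> card e = 2)"

definition adj :: "'a set set \<Rightarrow> 'a \<Rightarrow> 'a \<Rightarrow> bool" where
  "adj E u v \<longleftrightarrow> {u, v} \<in> E"

definition degree :: "'a set set \<Rightarrow> 'a \<Rightarrow> nat" where
  "degree E v = card {e \<in> E. v \<in> e}"

definition max_degree_le :: "'a set \<Rightarrow> 'a set set \<Rightarrow> nat \<Rightarrow> bool" where
  "max_degree_le V E k \<longleftrightarrow> (\<forall>v\<in>V. degree E v \<le> k)"

definition max_degree_eq :: "'a set \<Rightarrow> 'a set set \<Rightarrow> nat \<Rightarrow> bool" where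
  "max_degree_eq V E k \<longleftrightarrow> max_degree_le V E k \<and> (\<exists>v\<in>V. degree E v = k)"

text \<open>Planarity: a drawing in the plane (identified with the complex plane), vertices
  mapped injectively to points, each edge drawn as an arc joining its endpoints which
  meets the vertex points only at its endpoints, and two distinct edges meet only in
  the images of common endpoints.\<close>
definition planar :: "'a set \<Rightarrow> 'a set set \<Rightarrow> bool" where
  "planar V E \<longleftrightarrow> (\<exists>(p :: 'a \<Rightarrow> complex) (\<gamma> :: 'a set \<Rightarrow> real \<Rightarrow> complex).
      inj_on p V \<and>
      (\<forall>e\<in>E. arc (\<gamma> e) \<and> {pathstart (\<gamma> e), pathfinish (\<gamma> e)} = p ` e \<and>
               path_image (\<gamma> e) \<inter> p ` V = p ` e) \<and>
      (\<forall>e\<in>E. \<forall>e'\<in>E. e \<noteq> e' \<longrightarrow> path_image (\<gamma> e) \<inter> path_image (\<gamma> e') \<subseteq> p ` (e \<inter> e')))"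

text \<open>Contains a subgraph isomorphic to the 4-fan (not necessarily induced).\<close>
definition has_4fan :: "'a set \<Rightarrow> 'a set set \<Rightarrow> bool" where
  "has_4fan V E \<longleftrightarrow> (\<exists>c u1 u2 u3 u4 u5.
      distinct [c, u1, u2, u3, u4, u5] \<and> set [c, u1, u2, u3, u4, u5] \<subseteq> V \<and>
      adj E c u1 \<and> adj E c u2 \<and> adj E c u3 \<and> adj E c u4 \<and> adj E c u5 \<and>
      adj E u1 u2 \<and> adj E u2 u3 \<and> adj E u3 u4 \<and> adj E u4 u5)"

definition total_coloring :: "'a set \<Rightarrow> 'a set set \<Rightarrow> nat \<Rightarrow> ('a \<Rightarrow> nat) \<Rightarrow> ('a set \<Rightarrow> nat) \<Rightarrow> bool" where
  "total_coloring V E k f g \<longleftrightarrow>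
     (\<forall>v\<in>V. f v \<in> {1..k}) \<and> (\<forall>e\<in>E. g e \<in> {1..k}) \<and>
     (\<forall>u\<in>V. \<forall>v\<in>V. adj E u v \<longrightarrow> f u \<noteq> f v) \<and>
     (\<forall>e\<in>E. \<forall>e'\<in>E. e \<noteq> e' \<and> e \<inter> e' \<noteq> {} \<longrightarrow> g e \<noteq> g e') \<and>
     (\<forall>e\<in>E. \<forall>v\<in>e. f v \<noteq> g e)"

definition total_colorable :: "'a set \<Rightarrow> 'a set set \<Rightarrow> nat \<Rightarrow> bool" where
  "total_colorable V E k \<longleftrightarrow> (\<exists>f g. total_coloring V E k f g)"

text \<open>Minimal counterexample. Competing graphs H are taken on vertex type nat, which
  loses no generality since every finite graph is isomorphic to one on nat.\<close>
definition minimal_counterexample :: "'a set \<Rightarrow> 'a set set \<Rightarrow> bool" where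
  "minimal_counterexample V E \<longleftrightarrow>
     simple_graph V E \<and> planar V E \<and> max_degree_eq V E 8 \<and> \<not> has_4fan V E \<and>
     \<not> total_colorable V E 9 \<and>
     (\<forall>(VH :: nat set) EH. simple_graph VH EH \<and> planar VH EH \<and> max_degree_le VH EH 8 \<and>
        \<not> has_4fan VH EH \<and> card VH + card EH < card V + card E \<longrightarrow> total_colorable VH EH 9)"

end

theory Submission imports Defs begin
definition star :: "'a set set \<Rightarrow> 'a \<Rightarrow> 'a set set" where
  "star E p = {e \<in> E. p \<in> e}"

definition okS :: "'b set \<Rightarrow> nat \<Rightarrow> ('b \<Rightarrow> nat) \<Rightarrow> bool" where
  "okS S c g \<longleftrightarrow> inj_on g S \<and> (\<forall>e\<in>S. g e \<noteq> c)"

lemma tc_okS: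
  assumes "total_coloring V E k f g" "p \<in> V"
  shows "okS (star E p) (f p) g"
proof -
  have e: "\<forall>e\<in>E. \<forall>e'\<in>E. e \<noteq> e' \<and> e \<inter> e' \<noteq> {} \<longrightarrow> g e \<noteq> g e'"
    and ve: "\<forall>e\<in>E. \<forall>v\<in>e. f v \<noteq> g e" using assms(1) unfolding total_coloring_def by auto
  have "inj_on g (star E p)"
  proof (rule inj_onI)
    fix a b assume "a \<in> star E p" "b \<in> star E p" "g a = g b"
    then show "a = b" using e unfolding star_def by blast
  qed
  moreover have "\<forall>e\<in>star E p. g e \<noteq> f p" using ve unfolding star_def by fastforce
  ultimately show ?thesis unfolding okS_def by blast
qed

lemma okS_tc:
  assumes "simple_graph V E" "\<forall>v\<in>V. f v \<in> {1..k}" "\<forall>e\<in>E. g e \<in> {1..k}"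
    "\<forall>p\<in>V. \<forall>q\<in>V. adj E p q \<longrightarrow> f p \<noteq> f q"
    "\<forall>p\<in>V. okS (star E p) (f p) g"
  shows "total_coloring V E k f g"
proof -
  have sub: "\<And>e. e \<in> E \<Longrightarrow> e \<subseteq> V" using assms(1) unfolding simple_graph_def by blast
  have "\<forall>e\<in>E. \<forall>e'\<in>E. e \<noteq> e' \<and> e \<inter> e' \<noteq> {} \<longrightarrow> g e \<noteq> g e'"
  proof (intro ballI impI)
    fix e e' assume ee: "e \<in> E" "e' \<in> E" "e \<noteq> e' \<and> e \<inter> e' \<noteq> {}"
    then obtain p where p: "p \<in> e" "p \<in> e'" by blast
    then have "p \<in> V" using sub ee by blast
    then have "inj_on g (star E p)" using assms(5) okS_def by blast
    moreover have "e \<in> star E p" "e' \<in> star E p" using ee p by (auto simp: star_def)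
    ultimately show "g e \<noteq> g e'" using ee unfolding inj_on_def by blast
  qed
  moreover have "\<forall>e\<in>E. \<forall>v\<in>e. f v \<noteq> g e"
  proof (intro ballI)
    fix e v assume "e \<in> E" "v \<in> e"
    then have "v \<in> V" "e \<in> star E v" using sub by (auto simp: star_def)
    then show "f v \<noteq> g e" using assms(5) unfolding okS_def by fastforce
  qed
  ultimately show ?thesis using assms unfolding total_coloring_def by blast
qed

lemma okS_perm:
  assumes "okS S c g" "D \<subseteq> S" "\<forall>e\<in>S - D. g2 e = g e" "inj_on g2 D" "g2 ` D = g ` D"
  shows "okS S c g2"
proof -
  have inj: "inj_on g S" and av: "\<forall>e\<in>S. g e \<noteq> c" using assms(1) unfolding okS_def by auto
  have "inj_on g2 S"
  proof (rule inj_onI)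
    fix a b assume ab: "a \<in> S" "b \<in> S" "g2 a = g2 b"
    show "a = b"
    proof (cases "a \<in> D")
      case True
      note aD = True
      show ?thesis
      proof (cases "b \<in> D")
        case True then show ?thesis using aD ab assms(4) inj_on_def by metis
      next
        case False
        have "g2 a \<in> g ` D" using aD assms(5) by blast
        then obtain d where d: "d \<in> D" "g2 a = g d" by blast
        have "g2 b = g b" using False ab assms(3) by blast
        then have "g d = g b" using d ab by simp
        then have "d = b" using inj d ab assms(2) inj_on_def by (metis subsetD)
        then show ?thesis using d False by blast
      qed
    next
      case False
      note aD = False
      show ?thesis
      proof (cases "b \<in> D")
        case True
        have "g2 b \<in> g ` D" using True assms(5) by blast
        then obtain d where d: "d \<in> D" "g2 b = g d" by blast
        have "g2 a = g a" using aD ab assms(3) by blast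
        then have "g d = g a" using d ab by simp
        then have "d = a" using inj d ab assms(2) inj_on_def by (metis subsetD)
        then show ?thesis using d aD by blast
      next
        case False
        then show ?thesis using aD ab assms(3) inj inj_on_def by (metis DiffI)
      qed
    qed
  qed
  moreover have "\<forall>e\<in>S. g2 e \<noteq> c"
  proof
    fix e assume e: "e \<in> S"
    show "g2 e \<noteq> c"
    proof (cases "e \<in> D")
      case True
      then have "g2 e \<in> g ` D" using assms(5) by blast
      then show ?thesis using av assms(2) by fastforce
    next
      case False then show ?thesis using e assms(3) av by auto
    qed
  qed
  ultimately show ?thesis unfolding okS_def by blast
qed

lemma okS_v:
  assumes "okS S c g" "D \<subseteq> S" "e0 \<notin> S" "\<forall>e\<in>S - D. g2 e = g e"
    "inj_on g2 (insert e0 D)" "g2 ` (insert e0 D) \<subseteq> g ` D \<union> {m}" "m \<notin> g ` S" "m \<noteq> c"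
  shows "okS (insert e0 S) c g2"
proof -
  have inj: "inj_on g S" and av: "\<forall>e\<in>S. g e \<noteq> c" using assms(1) unfolding okS_def by auto
  have key: "\<And>a b. a \<in> insert e0 D \<Longrightarrow> b \<in> S - D \<Longrightarrow> g2 a \<noteq> g2 b"
  proof
    fix a b assume a: "a \<in> insert e0 D" and b: "b \<in> S - D" and eq: "g2 a = g2 b"
    have gb: "g2 b = g b" using b assms(4) by blast
    have "g2 a \<in> g ` D \<union> {m}" using a assms(6) by blast
    then show False
    proof
      assume "g2 a \<in> g ` D"
      then obtain d where d: "d \<in> D" "g2 a = g d" by blast
      then have "g d = g b" using eq gb by simp
      then have "d = b" using inj d b assms(2) inj_on_def by (metis DiffD1 subsetD)
      then show False using d b by blast
    next
      assume "g2 a \<in> {m}"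
      then have "g b = m" using eq gb by simp
      then show False using assms(7) b by blast
    qed
  qed
  have "insert e0 S = insert e0 D \<union> (S - D)" using assms(2) by blast
  have "inj_on g2 (insert e0 S)"
  proof (rule inj_onI)
    fix a b assume ab: "a \<in> insert e0 S" "b \<in> insert e0 S" "g2 a = g2 b"
    consider "a \<in> insert e0 D" "b \<in> insert e0 D" | "a \<in> insert e0 D" "b \<in> S - D"
      | "a \<in> S - D" "b \<in> insert e0 D" | "a \<in> S - D" "b \<in> S - D" using ab by blast
    then show "a = b"
    proof cases
      case 1 then show ?thesis using ab assms(5) inj_on_def by metis
    next
      case 2 then show ?thesis using key ab by blast
    next
      case 3 then show ?thesis using key ab by metis
    next
      case 4 then show ?thesis using ab assms(4) inj inj_on_def by (metis DiffD1)
    qed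
  qed
  moreover have "\<forall>e\<in>insert e0 S. g2 e \<noteq> c"
  proof
    fix e assume e: "e \<in> insert e0 S"
    show "g2 e \<noteq> c"
    proof (cases "e \<in> insert e0 D")
      case True
      then have "g2 e \<in> g ` D \<union> {m}" using assms(6) by blast
      then show ?thesis using av assms(2) assms(8) by fastforce
    next
      case False then show ?thesis using e assms(4) av by auto
    qed
  qed
  ultimately show ?thesis unfolding okS_def by blast
qed

lemma ex_free:
  assumes "finite F" "card F < 9"
  shows "\<exists>c\<in>{1..9::nat}. c \<notin> F"
proof (rule ccontr)
  assume "\<not> ?thesis"
  then have "{1..9::nat} \<subseteq> F" by blast
  then have "card {1..9::nat} \<le> card F" using assms(1) card_mono by blast
  then show False using assms(2) by simp
qed

lemma ex_free_list:
  assumes "length xs < 9"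
  shows "\<exists>c\<in>{1..9::nat}. c \<notin> set xs"
  using ex_free[of "set xs"] assms card_length[of xs] by simp
lemma comb:
  fixes ux wx vw wy vy vz zt zs vt m :: nat
  assumes "distinct [vw, vy, vz, vt, m]" "ux \<noteq> wx" "distinct [vw, wx, wy]" "vy \<noteq> wy"
    "distinct [vz, zt, zs]" "vt \<noteq> zt"
  shows "\<exists>cuv cux cwx cvw cwy cvy cvz czt cvt.
     distinct [cuv, cvw, cvy, cvz, cvt] \<and> set [cuv, cvw, cvy, cvz, cvt] \<subseteq> {vw, vy, vz, vt, m} \<and>
     cuv \<noteq> cux \<and> distinct [cvw, cwx, cwy] \<and> distinct [cvz, czt, zs] \<and>
     {cux, cwx} = {ux, wx} \<and> {cvy, cwy} = {vy, wy} \<and> {cvt, czt} = {vt, zt}"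
proof -
  consider "m \<noteq> ux" | "m = ux" "m \<noteq> wy" | "m = ux" "wy = m" "m \<notin> {zt, zs}"
    | "m = ux" "wy = m" "vy \<noteq> wx"
    | "m = ux" "wy = m" "wx = vy" "zt = m" "zs \<noteq> vt"
    | "m = ux" "wy = m" "wx = vy" "m \<in> {zt, zs}" "vy \<notin> {zt, zs}"
    | "m = ux" "wy = m" "wx = vy" "zt = vy" "zs = m"
  proof -
    have "vy \<noteq> vt" "vy \<noteq> m" using assms(1) by auto
    then show ?thesis using that by blast
  qed
  then show ?thesis
  proof cases
    case 1 show ?thesis
      apply (rule exI[of _ m], rule exI[of _ ux], rule exI[of _ wx], rule exI[of _ vw], rule exI[of _ wy], rule exI[of _ vy], rule exI[of _ vz], rule exI[of _ zt], rule exI[of _ vt])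
      using 1 assms by (simp add: insert_commute; auto)
  next
    case 2 show ?thesis
      apply (rule exI[of _ vw], rule exI[of _ ux], rule exI[of _ wx], rule exI[of _ m], rule exI[of _ wy], rule exI[of _ vy], rule exI[of _ vz], rule exI[of _ zt], rule exI[of _ vt])
      using 2 assms by (simp add: insert_commute; auto)
  next
    case 3 show ?thesis
      apply (rule exI[of _ vz], rule exI[of _ ux], rule exI[of _ wx], rule exI[of _ vw], rule exI[of _ wy], rule exI[of _ vy], rule exI[of _ m], rule exI[of _ zt], rule exI[of _ vt])
      using 3 assms by (simp add: insert_commute; auto)
  next
    case 4 show ?thesis
      apply (rule exI[of _ vy], rule exI[of _ ux], rule exI[of _ wx], rule exI[of _ vw], rule exI[of _ vy], rule exI[of _ m], rule exI[of _ vz], rule exI[of _ zt], rule exI[of _ vt])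
      using 4 assms by (simp add: insert_commute; auto)
  next
    case 5 show ?thesis
      apply (rule exI[of _ vt], rule exI[of _ ux], rule exI[of _ wx], rule exI[of _ vw], rule exI[of _ wy], rule exI[of _ vy], rule exI[of _ vz], rule exI[of _ vt], rule exI[of _ m])
      using 5 assms by (simp add: insert_commute; auto)
  next
    case 6 show ?thesis
      apply (rule exI[of _ vw], rule exI[of _ vy], rule exI[of _ m], rule exI[of _ vz], rule exI[of _ vy], rule exI[of _ m], rule exI[of _ vy], rule exI[of _ zt], rule exI[of _ vt])
      using 6 assms by (simp add: insert_commute; auto)
  next
    case 7 show ?thesis
      apply (rule exI[of _ vw], rule exI[of _ vy], rule exI[of _ m], rule exI[of _ vt], rule exI[of _ vy], rule exI[of _ m], rule exI[of _ vz], rule exI[of _ vt], rule exI[of _ vy])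
      using 7 assms by (simp add: insert_commute; auto)
  qed
qed
lemma transport:
  fixes V :: "'a set" and E :: "'a set set"
  assumes sg: "simple_graph V E" and pl: "planar V E" and md: "max_degree_le V E 8"
    and nf: "\<not> has_4fan V E"
    and minH: "\<forall>(VH :: nat set) EH. simple_graph VH EH \<and> planar VH EH \<and> max_degree_le VH EH 8 \<and>
        \<not> has_4fan VH EH \<and> card VH + card EH < N \<longrightarrow> total_colorable VH EH 9"
    and lt: "card V + card E < N"
  shows "total_colorable V E 9"
proof -
  have finV: "finite V" and sub: "\<And>e. e \<in> E \<Longrightarrow> e \<subseteq> V" and c2: "\<And>e. e \<in> E \<Longrightarrow> card e = 2"
    using sg unfolding simple_graph_def by auto
  obtain h :: "'a \<Rightarrow> nat" where inj: "inj_on h V"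
    using finite_imp_inj_to_nat_seg[OF finV] by blast
  define k where "k = inv_into V h"
  have kh: "\<And>x. x \<in> V \<Longrightarrow> k (h x) = x" unfolding k_def using inj by (simp add: inv_into_f_f)
  have khe: "\<And>e. e \<in> E \<Longrightarrow> k ` h ` e = e"
  proof -
    fix e assume "e \<in> E"
    then have "e \<subseteq> V" using sub by blast
    then show "k ` h ` e = e" using kh by (simp add: image_image subset_iff)
  qed
  have injE: "inj_on ((`) h) E"
    by (rule inj_onI) (metis khe)
  define VH where "VH = h ` V"
  define EH where "EH = (`) h ` E"
  have memh: "\<And>x e. x \<in> V \<Longrightarrow> e \<in> E \<Longrightarrow> (h x \<in> h ` e) = (x \<in> e)"
    using inj sub by (meson inj_on_image_mem_iff)
  have sgH: "simple_graph VH EH"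
    unfolding simple_graph_def VH_def EH_def
  proof (intro conjI)
    show "finite (h ` V)" using finV by simp
  next
    show "\<forall>e'\<in>(`) h ` E. e' \<subseteq> h ` V \<and> card e' = 2"
    proof
    fix e' assume "e' \<in> (`) h ` E"
    then obtain e where e: "e \<in> E" "e' = h ` e" by blast
    have "inj_on h e" using inj sub[OF e(1)] inj_on_subset by blast
    then have "card e' = 2" using e c2 by (simp add: card_image)
    moreover have "e' \<subseteq> h ` V" using e sub by blast
    ultimately show "e' \<subseteq> h ` V \<and> card e' = 2" by blast
    qed
  qed
  have cardVH: "card VH = card V" unfolding VH_def using inj by (simp add: card_image)
  have cardEH: "card EH = card E" unfolding EH_def using injE by (simp add: card_image)
  have plH: "planar VH EH"
  proof -
    obtain p :: "'a \<Rightarrow> complex" and \<gamma> :: "'a set \<Rightarrow> real \<Rightarrow> complex" where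
      p1: "inj_on p V" and
      p2: "\<forall>e\<in>E. arc (\<gamma> e) \<and> {pathstart (\<gamma> e), pathfinish (\<gamma> e)} = p ` e \<and>
               path_image (\<gamma> e) \<inter> p ` V = p ` e" and
      p3: "\<forall>e\<in>E. \<forall>e'\<in>E. e \<noteq> e' \<longrightarrow> path_image (\<gamma> e) \<inter> path_image (\<gamma> e') \<subseteq> p ` (e \<inter> e')"
      using pl unfolding planar_def by (elim exE conjE) (rule that)
    define p' where "p' = p \<circ> k"
    define \<gamma>' where "\<gamma>' = (\<lambda>e'. \<gamma> (k ` e'))"
    have img: "\<And>A. A \<subseteq> V \<Longrightarrow> p' ` h ` A = p ` A"
    proof -
      fix A assume A: "A \<subseteq> V"
      have "p' ` h ` A = (\<lambda>x. p (k (h x))) ` A" by (simp add: image_image p'_def)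
      also have "\<dots> = p ` A" using kh A by (intro image_cong) auto
      finally show "p' ` h ` A = p ` A" .
    qed
    have pV: "p' ` h ` V = p ` V" using img by blast
    have pe: "\<And>e. e \<in> E \<Longrightarrow> p' ` h ` e = p ` e" using img sub by blast
    have ge: "\<And>e. e \<in> E \<Longrightarrow> \<gamma>' (h ` e) = \<gamma> e" unfolding \<gamma>'_def using khe by simp
    have i1: "inj_on p' (h ` V)"
    proof (rule inj_onI)
      fix a b assume ab: "a \<in> h ` V" "b \<in> h ` V" "p' a = p' b"
      obtain a0 where a0: "a0 \<in> V" "a = h a0" using ab(1) by (rule imageE) simp
      obtain b0 where b0: "b0 \<in> V" "b = h b0" using ab(2) by (rule imageE) simp
      have "p a0 = p b0" using ab(3) a0 b0 kh unfolding p'_def by simp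
      then have "a0 = b0" using p1 a0(1) b0(1) by (simp add: inj_on_eq_iff)
      then show "a = b" using a0 b0 by simp
    qed
    have i2: "\<forall>e'\<in>EH. arc (\<gamma>' e') \<and> {pathstart (\<gamma>' e'), pathfinish (\<gamma>' e')} = p' ` e' \<and>
               path_image (\<gamma>' e') \<inter> p' ` VH = p' ` e'"
    proof
      fix e' assume "e' \<in> EH"
      then obtain e where e: "e \<in> E" "e' = h ` e" unfolding EH_def by (rule imageE) simp
      have "arc (\<gamma> e) \<and> {pathstart (\<gamma> e), pathfinish (\<gamma> e)} = p ` e \<and>
               path_image (\<gamma> e) \<inter> p ` V = p ` e" using p2 e(1) by blast
      moreover have "\<gamma>' e' = \<gamma> e" using ge e by simp
      moreover have "p' ` e' = p ` e" using pe e by simp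
      moreover have "p' ` VH = p ` V" using pV VH_def by simp
      ultimately show "arc (\<gamma>' e') \<and> {pathstart (\<gamma>' e'), pathfinish (\<gamma>' e')} = p' ` e' \<and>
               path_image (\<gamma>' e') \<inter> p' ` VH = p' ` e'" by simp
    qed
    have i3: "\<forall>e1\<in>EH. \<forall>e2\<in>EH. e1 \<noteq> e2 \<longrightarrow> path_image (\<gamma>' e1) \<inter> path_image (\<gamma>' e2) \<subseteq> p' ` (e1 \<inter> e2)"
    proof (intro ballI impI)
      fix e1 e2 assume ee: "e1 \<in> EH" "e2 \<in> EH" "e1 \<noteq> e2"
      obtain d1 where d1: "d1 \<in> E" "e1 = h ` d1" using ee(1) unfolding EH_def by (rule imageE) simp
      obtain d2 where d2: "d2 \<in> E" "e2 = h ` d2" using ee(2) unfolding EH_def by (rule imageE) simp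
      have d: "d1 \<in> E" "d2 \<in> E" "e1 = h ` d1" "e2 = h ` d2" "d1 \<noteq> d2" using d1 d2 ee(3) by auto
      have "h ` d1 \<inter> h ` d2 = h ` (d1 \<inter> d2)" using inj sub d(1,2)
        by (metis inj_on_image_Int)
      moreover have "p' ` h ` (d1 \<inter> d2) = p ` (d1 \<inter> d2)"
        by (rule img) (use sub d(1) in blast)
      moreover have "path_image (\<gamma> d1) \<inter> path_image (\<gamma> d2) \<subseteq> p ` (d1 \<inter> d2)"
        by (rule p3[rule_format, OF d(1) d(2) d(5)])
      ultimately show "path_image (\<gamma>' e1) \<inter> path_image (\<gamma>' e2) \<subseteq> p' ` (e1 \<inter> e2)"
        using d ge by simp
    qed
    have "inj_on p' VH" using i1 VH_def by simp
    then have all: "inj_on p' VH \<and> (\<forall>e'\<in>EH. arc (\<gamma>' e') \<and> {pathstart (\<gamma>' e'), pathfinish (\<gamma>' e')} = p' ` e' \<and>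
               path_image (\<gamma>' e') \<inter> p' ` VH = p' ` e') \<and>
      (\<forall>e1\<in>EH. \<forall>e2\<in>EH. e1 \<noteq> e2 \<longrightarrow> path_image (\<gamma>' e1) \<inter> path_image (\<gamma>' e2) \<subseteq> p' ` (e1 \<inter> e2))"
      using i2 i3 by blast
    show ?thesis unfolding planar_def
      by (rule exI[of _ p'], rule exI[of _ \<gamma>'], rule all)
  qed
  have mdH: "max_degree_le VH EH 8"
    unfolding max_degree_le_def
  proof
    fix x' assume "x' \<in> VH"
    then obtain x where x: "x \<in> V" "x' = h x" unfolding VH_def by blast
    have "{e' \<in> EH. x' \<in> e'} = (`) h ` {e \<in> E. x \<in> e}"
      unfolding EH_def using x memh by auto
    moreover have "inj_on ((`) h) {e \<in> E. x \<in> e}" using injE inj_on_subset by fastforce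
    ultimately have "degree EH x' = degree E x" unfolding degree_def by (simp add: card_image)
    then show "degree EH x' \<le> 8" using md x unfolding max_degree_le_def by simp
  qed
  have adjH: "\<And>a b. adj EH a b \<Longrightarrow> adj E (k a) (k b)"
  proof -
    fix a b assume "adj EH a b"
    then obtain e where e: "e \<in> E" "{a, b} = h ` e" unfolding adj_def EH_def by blast
    have "k ` {a, b} = e" using khe[OF e(1)] e(2) by metis
    then have "{k a, k b} = e" by simp
    then show "adj E (k a) (k b)" using e unfolding adj_def by simp
  qed
  have nfH: "\<not> has_4fan VH EH"
  proof
    assume "has_4fan VH EH"
    then obtain c u1 u2 u3 u4 u5 where
      f1: "distinct [c, u1, u2, u3, u4, u5]" and f2: "set [c, u1, u2, u3, u4, u5] \<subseteq> VH" and
      f3: "adj EH c u1 \<and> adj EH c u2 \<and> adj EH c u3 \<and> adj EH c u4 \<and> adj EH c u5 \<and>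
      adj EH u1 u2 \<and> adj EH u2 u3 \<and> adj EH u3 u4 \<and> adj EH u4 u5"
      unfolding has_4fan_def by blast
    have ik: "inj_on k VH" unfolding VH_def k_def by (rule inj_on_inv_into) simp
    have D: "distinct (map k [c, u1, u2, u3, u4, u5])"
      unfolding distinct_map using f1 f2 ik inj_on_subset by blast
    have S: "set (map k [c, u1, u2, u3, u4, u5]) \<subseteq> V"
      using f2 unfolding VH_def k_def by (auto intro: inv_into_into)
    have "has_4fan V E" unfolding has_4fan_def
      apply (rule exI[of _ "k c"], rule exI[of _ "k u1"], rule exI[of _ "k u2"], rule exI[of _ "k u3"], rule exI[of _ "k u4"], rule exI[of _ "k u5"])
      using D S f3 adjH by (simp del: distinct.simps list.set)
    then show False using nf by blast
  qed
  have cc: "card VH + card EH < N" using cardVH cardEH lt by simp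
  have "total_colorable VH EH 9"
    by (rule minH[rule_format, OF conjI[OF sgH conjI[OF plH conjI[OF mdH conjI[OF nfH cc]]]]])
  then obtain fH gH where tH: "total_coloring VH EH 9 fH gH" unfolding total_colorable_def by blast
  note tHs = tH[unfolded total_coloring_def]
  have tH1: "\<forall>v\<in>VH. fH v \<in> {1..9}" using tHs by (elim conjE) assumption
  have tH2: "\<forall>e\<in>EH. gH e \<in> {1..9}" using tHs by (elim conjE) assumption
  have tH3: "\<forall>u\<in>VH. \<forall>v\<in>VH. adj EH u v \<longrightarrow> fH u \<noteq> fH v" using tHs by (elim conjE) assumption
  have tH4: "\<forall>e\<in>EH. \<forall>e'\<in>EH. e \<noteq> e' \<and> e \<inter> e' \<noteq> {} \<longrightarrow> gH e \<noteq> gH e'" using tHs by (elim conjE) assumption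
  have tH5: "\<forall>e\<in>EH. \<forall>v\<in>e. fH v \<noteq> gH e" using tHs by (elim conjE) assumption
  have tcV: "total_coloring V E 9 (fH \<circ> h) (\<lambda>e. gH (h ` e))"
    unfolding total_coloring_def
  proof (intro conjI)
    show "\<forall>v\<in>V. (fH \<circ> h) v \<in> {1..9}" using tH1 unfolding VH_def by simp
    show "\<forall>e\<in>E. gH (h ` e) \<in> {1..9}" using tH2 unfolding EH_def by simp
    show "\<forall>u\<in>V. \<forall>v\<in>V. adj E u v \<longrightarrow> (fH \<circ> h) u \<noteq> (fH \<circ> h) v"
    proof (intro ballI impI)
      fix a b assume ab: "a \<in> V" "b \<in> V" "adj E a b"
      have "h ` {a, b} \<in> EH" unfolding EH_def using ab(3)[unfolded adj_def] by (rule imageI)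
      then have m1: "adj EH (h a) (h b)" unfolding adj_def by simp
      have m2: "h a \<in> VH" unfolding VH_def using ab(1) by (rule imageI)
      have m3: "h b \<in> VH" unfolding VH_def using ab(2) by (rule imageI)
      show "(fH \<circ> h) a \<noteq> (fH \<circ> h) b" using tH3[rule_format, OF m2 m3 m1] by simp
    qed
    show "\<forall>e\<in>E. \<forall>e'\<in>E. e \<noteq> e' \<and> e \<inter> e' \<noteq> {} \<longrightarrow> gH (h ` e) \<noteq> gH (h ` e')"
    proof (intro ballI impI)
      fix e e' assume ee: "e \<in> E" "e' \<in> E" "e \<noteq> e' \<and> e \<inter> e' \<noteq> {}"
      have n1: "h ` e \<noteq> h ` e'"
      proof
        assume "h ` e = h ` e'"
        then have "e = e'" using injE ee(1,2) by (simp add: inj_on_eq_iff)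
        then show False using ee(3) by simp
      qed
      obtain q where q: "q \<in> e" "q \<in> e'" using ee(3) by blast
      have n2: "h ` e \<inter> h ` e' \<noteq> {}" using q by blast
      have n3: "h ` e \<in> EH" unfolding EH_def using ee(1) by (rule imageI)
      have n4: "h ` e' \<in> EH" unfolding EH_def using ee(2) by (rule imageI)
      show "gH (h ` e) \<noteq> gH (h ` e')" using tH4[rule_format, OF n3 n4 conjI[OF n1 n2]] .
    qed
    show "\<forall>e\<in>E. \<forall>v\<in>e. (fH \<circ> h) v \<noteq> gH (h ` e)"
    proof (intro ballI)
      fix e v assume ev: "e \<in> E" "v \<in> e"
      have n3: "h ` e \<in> EH" unfolding EH_def using ev(1) by (rule imageI)
      have n5: "h v \<in> h ` e" using ev(2) by (rule imageI)
      show "(fH \<circ> h) v \<noteq> gH (h ` e)" using tH5[rule_format, OF n3 n5] by simp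
    qed
  qed
  show ?thesis unfolding total_colorable_def by (rule exI, rule exI, rule tcV)
qed
lemma extend:
  fixes V :: "'a set" and E :: "'a set set" and f :: "'a \<Rightarrow> nat" and g :: "'a set \<Rightarrow> nat"
  assumes sg: "simple_graph V E" and vV: "v \<in> V" and dv: "degree E v = 8"
    and dis: "distinct [u, w, y, z, t]"
    and a1: "adj E v u" and a2: "adj E v w" and a3: "adj E v y" and a4: "adj E v z" and a5: "adj E v t"
    and xn: "x \<notin> {v, u, w, y, z, t}"
    and du: "degree E u = 2" and dw: "degree E w = 3" and dz: "degree E z = 3"
    and a6: "adj E x u" and a7: "adj E x w" and a8: "adj E w y" and a9: "adj E z t"
    and tc: "total_coloring V (E - {{u, v}}) 9 f g"
  shows "total_colorable V E 9"
proof -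
  define E' where "E' = E - {{u, v}}"
  have sub: "\<And>e. e \<in> E \<Longrightarrow> e \<subseteq> V" and c2: "\<And>e. e \<in> E \<Longrightarrow> card e = 2" and finV: "finite V"
    using sg unfolding simple_graph_def by auto
  have finE: "finite E"
  proof (rule finite_subset[of E "Pow V"])
    show "E \<subseteq> Pow V" using sub by blast
    show "finite (Pow V)" using finV by simp
  qed
  have ne: "\<And>a b. {a, b} \<in> E \<Longrightarrow> a \<noteq> b"
  proof
    fix a b assume ab: "{a, b} \<in> E" "a = b"
    then have "card {a, b} = 2" using c2 by blast
    with ab(2) show False by simp
  qed
  have eV: "\<And>a b. {a, b} \<in> E \<Longrightarrow> a \<in> V \<and> b \<in> V" using sub by blast
  have e_uv: "{u, v} \<in> E" using a1 unfolding adj_def by (simp add: insert_commute)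
  have e_xu: "{x, u} \<in> E" using a6 unfolding adj_def .
  have e_xw: "{x, w} \<in> E" using a7 unfolding adj_def .
  have e_vw: "{v, w} \<in> E" using a2 unfolding adj_def .
  have e_vy: "{v, y} \<in> E" using a3 unfolding adj_def .
  have e_vz: "{v, z} \<in> E" using a4 unfolding adj_def .
  have e_vt: "{v, t} \<in> E" using a5 unfolding adj_def .
  have e_wy: "{w, y} \<in> E" using a8 unfolding adj_def .
  have e_zt: "{z, t} \<in> E" using a9 unfolding adj_def .
  have n0: "u \<noteq> v" "v \<noteq> w" "v \<noteq> y" "v \<noteq> z" "v \<noteq> t"
    using ne e_uv e_vw e_vy e_vz e_vt by blast+
  have n1: "u \<noteq> w" "u \<noteq> y" "u \<noteq> z" "u \<noteq> t" "w \<noteq> y" "w \<noteq> z" "w \<noteq> t" "y \<noteq> z" "y \<noteq> t" "z \<noteq> t"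
    using dis by auto
  have n2: "x \<noteq> v" "x \<noteq> u" "x \<noteq> w" "x \<noteq> y" "x \<noteq> z" "x \<noteq> t" using xn by auto
  note neqA = n0 n1 n2 n0[symmetric] n1[symmetric] n2[symmetric]
  have uV: "u \<in> V" and wV: "w \<in> V" and yV: "y \<in> V" and zV: "z \<in> V" and tV: "t \<in> V" and xV: "x \<in> V"
    using eV e_uv e_vw e_vy e_vz e_vt e_xu by blast+
  have finS: "\<And>p. finite (star E p)" unfolding star_def using finE by simp
  have degS: "\<And>p. degree E p = card (star E p)" unfolding degree_def star_def ..
  have Su: "star E u = {{u, v}, {x, u}}"
  proof -
    have A: "{{u, v}, {x, u}} \<subseteq> star E u" using e_uv e_xu unfolding star_def by auto
    have B: "card {{u, v}, {x, u}} = 2" using neqA by (simp add: doubleton_eq_iff)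
    have C: "card (star E u) = 2" using du degS by simp
    show ?thesis using card_subset_eq[OF finS A] B C by simp
  qed
  have Sw: "star E w = {{v, w}, {x, w}, {w, y}}"
  proof -
    have A: "{{v, w}, {x, w}, {w, y}} \<subseteq> star E w" using e_vw e_xw e_wy unfolding star_def by auto
    have B: "card {{v, w}, {x, w}, {w, y}} = 3" using neqA by (simp add: doubleton_eq_iff)
    have C: "card (star E w) = 3" using dw degS by simp
    show ?thesis using card_subset_eq[OF finS A] B C by simp
  qed
  obtain s where e_zs: "{z, s} \<in> E" and sz: "s \<noteq> z" and sv: "s \<noteq> v" and st: "s \<noteq> t"
    and Sz: "star E z = {{v, z}, {z, t}, {z, s}}"
  proof -
    have A: "{{v, z}, {z, t}} \<subseteq> star E z" using e_vz e_zt unfolding star_def by auto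
    have B: "card {{v, z}, {z, t}} = 2" using neqA by (simp add: doubleton_eq_iff)
    have C: "card (star E z) = 3" using dz degS by simp
    have "\<not> star E z \<subseteq> {{v, z}, {z, t}}"
    proof
      assume "star E z \<subseteq> {{v, z}, {z, t}}"
      then have "card (star E z) \<le> card {{v, z}, {z, t}}" by (rule card_mono[rotated]) simp
      then show False using B C by simp
    qed
    then obtain e3 where e3: "e3 \<in> star E z" "e3 \<notin> {{v, z}, {z, t}}" by blast
    have e3E: "e3 \<in> E" and ze3: "z \<in> e3" using e3(1) unfolding star_def by auto
    obtain a b where ab: "e3 = {a, b}" "a \<noteq> b" using c2[OF e3E] card_2_iff by metis
    obtain s where es: "e3 = {z, s}"
    proof (cases "z = a")
      case True then show ?thesis using that ab by simp
    next
      case False then have "z = b" using ze3 ab by simp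
      then show ?thesis using that[of a] ab by (simp add: insert_commute)
    qed
    have zsE: "{z, s} \<in> E" using e3E es by simp
    have s1: "s \<noteq> z" using ne[OF zsE] by simp
    have s2: "s \<noteq> v" using e3(2) es by (auto simp: insert_commute)
    have s3: "s \<noteq> t" using e3(2) es by auto
    have A2: "{{v, z}, {z, t}, {z, s}} \<subseteq> star E z" using A e3(1) es by simp
    have B2: "card {{v, z}, {z, t}, {z, s}} = 3" using neqA s1 s2 s3 by (simp add: doubleton_eq_iff)
    have "star E z = {{v, z}, {z, t}, {z, s}}" using card_subset_eq[OF finS A2] B2 C by simp
    then show ?thesis using that zsE s1 s2 s3 by blast
  qed
  have su: "s \<noteq> u"
  proof
    assume "s = u"
    then have "{z, u} \<in> star E u" using e_zs unfolding star_def by simp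
    then show False using Su neqA by (simp add: doubleton_eq_iff)
  qed
  have sw: "s \<noteq> w"
  proof
    assume "s = w"
    then have "{z, w} \<in> star E w" using e_zs unfolding star_def by simp
    then show False using Sw neqA by (simp add: doubleton_eq_iff)
  qed
  have sV: "s \<in> V" using eV e_zs by blast
  note neq = neqA sz sv st su sw sz[symmetric] sv[symmetric] st[symmetric] su[symmetric] sw[symmetric]
  have nbu: "\<And>q. {u, q} \<in> E \<Longrightarrow> q = v \<or> q = x"
  proof -
    fix q assume "{u, q} \<in> E"
    then have "{u, q} \<in> star E u" unfolding star_def by simp
    then show "q = v \<or> q = x" using Su by (auto simp: doubleton_eq_iff)
  qed
  have nbw: "\<And>q. {w, q} \<in> E \<Longrightarrow> q = v \<or> q = x \<or> q = y"
  proof -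
    fix q assume "{w, q} \<in> E"
    then have "{w, q} \<in> star E w" unfolding star_def by simp
    then show "q = v \<or> q = x \<or> q = y" using Sw by (auto simp: doubleton_eq_iff)
  qed
  have nbz: "\<And>q. {z, q} \<in> E \<Longrightarrow> q = v \<or> q = t \<or> q = s"
  proof -
    fix q assume "{z, q} \<in> E"
    then have "{z, q} \<in> star E z" unfolding star_def by simp
    then show "q = v \<or> q = t \<or> q = s" using Sz by (auto simp: doubleton_eq_iff)
  qed
  note tcs = tc[unfolded total_coloring_def, folded E'_def]
  have tcf: "\<forall>p\<in>V. f p \<in> {1..9}" using tcs by (elim conjE) assumption
  have tcg: "\<forall>e\<in>E'. g e \<in> {1..9}" using tcs by (elim conjE) assumption
  have tca: "\<forall>p\<in>V. \<forall>q\<in>V. adj E' p q \<longrightarrow> f p \<noteq> f q" using tcs by (elim conjE) assumption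
  have tce: "\<forall>e\<in>E'. \<forall>e'\<in>E'. e \<noteq> e' \<and> e \<inter> e' \<noteq> {} \<longrightarrow> g e \<noteq> g e'" using tcs by (elim conjE) assumption
  have tcE': "total_coloring V E' 9 f g" using tc unfolding E'_def .
  have gdiff: "\<And>p e1 e2. e1 \<in> E' \<Longrightarrow> e2 \<in> E' \<Longrightarrow> p \<in> e1 \<Longrightarrow> p \<in> e2 \<Longrightarrow> e1 \<noteq> e2 \<Longrightarrow> g e1 \<noteq> g e2"
  proof -
    fix p e1 e2 assume h: "e1 \<in> E'" "e2 \<in> E'" "p \<in> e1" "p \<in> e2" "e1 \<noteq> e2"
    have "e1 \<inter> e2 \<noteq> {}" using h(3,4) by blast
    then show "g e1 \<noteq> g e2" using tce[rule_format, OF h(1) h(2) conjI[OF h(5)]] by blast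
  qed
  have inE': "\<And>a b. {a, b} \<in> E \<Longrightarrow> a \<noteq> u \<and> b \<noteq> u \<Longrightarrow> {a, b} \<in> E'"
    unfolding E'_def by (auto simp: doubleton_eq_iff)
  have inE'2: "\<And>a b. {a, b} \<in> E \<Longrightarrow> a \<noteq> v \<and> b \<noteq> v \<Longrightarrow> {a, b} \<in> E'"
    unfolding E'_def by (auto simp: doubleton_eq_iff)
  have E'xu: "{x, u} \<in> E'" using inE'2[OF e_xu] neq by blast
  have E'xw: "{x, w} \<in> E'" using inE'[OF e_xw] neq by blast
  have E'vw: "{v, w} \<in> E'" using inE'[OF e_vw] neq by blast
  have E'vy: "{v, y} \<in> E'" using inE'[OF e_vy] neq by blast
  have E'vz: "{v, z} \<in> E'" using inE'[OF e_vz] neq by blast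
  have E'vt: "{v, t} \<in> E'" using inE'[OF e_vt] neq by blast
  have E'wy: "{w, y} \<in> E'" using inE'[OF e_wy] neq by blast
  have E'zt: "{z, t} \<in> E'" using inE'[OF e_zt] neq by blast
  have E'zs: "{z, s} \<in> E'" using inE'[OF e_zs] neq by blast
  note E'facts = E'xu E'xw E'vw E'vy E'vz E'vt E'wy E'zt E'zs
  define Sv' where "Sv' = star E' v"
  have Sv'eq: "Sv' = star E v - {{u, v}}" unfolding Sv'_def star_def E'_def by auto
  have uvS: "{u, v} \<in> star E v" unfolding star_def using e_uv by simp
  have cSv': "card Sv' = 7" using Sv'eq uvS dv degS finS by simp
  have finSv': "finite Sv'" using Sv'eq finS by simp
  define F where "F = insert (f v) (g ` Sv')"
  have "card (g ` Sv') \<le> 7" using card_image_le[OF finSv', of g] cSv' by simp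
  then have "card F < 9" unfolding F_def using finSv' by (simp add: card_insert_if)
  then obtain m where m9: "m \<in> {1..9}" and mF: "m \<notin> F" using ex_free[of F] finSv' F_def by auto
  have inSv': "\<And>a. {v, a} \<in> E' \<Longrightarrow> {v, a} \<in> Sv'" unfolding Sv'_def star_def by simp
  have mv: "\<And>a. {v, a} \<in> E' \<Longrightarrow> g {v, a} \<noteq> m"
  proof
    fix a assume "{v, a} \<in> E'" "g {v, a} = m"
    then have "m \<in> g ` Sv'" using inSv' by (metis imageI)
    then show False using mF F_def by simp
  qed
  have mfv: "m \<noteq> f v" using mF F_def by simp
  have P1: "distinct [g {v, w}, g {v, y}, g {v, z}, g {v, t}, m]"
  proof -
    have "g {v, w} \<noteq> g {v, y}" by (rule gdiff[where p=v]) (use E'facts neq in \<open>auto simp: doubleton_eq_iff\<close>)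
    moreover have "g {v, w} \<noteq> g {v, z}" by (rule gdiff[where p=v]) (use E'facts neq in \<open>auto simp: doubleton_eq_iff\<close>)
    moreover have "g {v, w} \<noteq> g {v, t}" by (rule gdiff[where p=v]) (use E'facts neq in \<open>auto simp: doubleton_eq_iff\<close>)
    moreover have "g {v, y} \<noteq> g {v, z}" by (rule gdiff[where p=v]) (use E'facts neq in \<open>auto simp: doubleton_eq_iff\<close>)
    moreover have "g {v, y} \<noteq> g {v, t}" by (rule gdiff[where p=v]) (use E'facts neq in \<open>auto simp: doubleton_eq_iff\<close>)
    moreover have "g {v, z} \<noteq> g {v, t}" by (rule gdiff[where p=v]) (use E'facts neq in \<open>auto simp: doubleton_eq_iff\<close>)
    moreover have "g {v, w} \<noteq> m" "g {v, y} \<noteq> m" "g {v, z} \<noteq> m" "g {v, t} \<noteq> m"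
      using mv E'facts by blast+
    ultimately show ?thesis by simp
  qed
  have P2: "g {x, u} \<noteq> g {x, w}" by (rule gdiff[where p=x]) (use E'facts neq in \<open>auto simp: doubleton_eq_iff\<close>)
  have P3: "distinct [g {v, w}, g {x, w}, g {w, y}]"
  proof -
    have "g {v, w} \<noteq> g {x, w}" by (rule gdiff[where p=w]) (use E'facts neq in \<open>auto simp: doubleton_eq_iff\<close>)
    moreover have "g {v, w} \<noteq> g {w, y}" by (rule gdiff[where p=w]) (use E'facts neq in \<open>auto simp: doubleton_eq_iff\<close>)
    moreover have "g {x, w} \<noteq> g {w, y}" by (rule gdiff[where p=w]) (use E'facts neq in \<open>auto simp: doubleton_eq_iff\<close>)
    ultimately show ?thesis by simp
  qed
  have P4: "g {v, y} \<noteq> g {w, y}" by (rule gdiff[where p=y]) (use E'facts neq in \<open>auto simp: doubleton_eq_iff\<close>)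
  have P5: "distinct [g {v, z}, g {z, t}, g {z, s}]"
  proof -
    have "g {v, z} \<noteq> g {z, t}" by (rule gdiff[where p=z]) (use E'facts neq in \<open>auto simp: doubleton_eq_iff\<close>)
    moreover have "g {v, z} \<noteq> g {z, s}" by (rule gdiff[where p=z]) (use E'facts neq in \<open>auto simp: doubleton_eq_iff\<close>)
    moreover have "g {z, t} \<noteq> g {z, s}" by (rule gdiff[where p=z]) (use E'facts neq in \<open>auto simp: doubleton_eq_iff\<close>)
    ultimately show ?thesis by simp
  qed
  have P6: "g {v, t} \<noteq> g {z, t}" by (rule gdiff[where p=t]) (use E'facts neq in \<open>auto simp: doubleton_eq_iff\<close>)
  obtain cuv cux cwx cvw cwy cvy cvz czt cvt where
    C1: "distinct [cuv, cvw, cvy, cvz, cvt]" and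
    C2: "set [cuv, cvw, cvy, cvz, cvt] \<subseteq> {g {v, w}, g {v, y}, g {v, z}, g {v, t}, m}" and
    C3: "cuv \<noteq> cux" and C4: "distinct [cvw, cwx, cwy]" and C5: "distinct [cvz, czt, g {z, s}]" and
    C6: "{cux, cwx} = {g {x, u}, g {x, w}}" and C7: "{cvy, cwy} = {g {v, y}, g {w, y}}" and
    C8: "{cvt, czt} = {g {v, t}, g {z, t}}"
    using comb[OF P1 P2 P3 P4 P5 P6] by blast
  define L where "L = {{u, v}, {x, u}, {x, w}, {v, w}, {w, y}, {v, y}, {v, z}, {z, t}, {v, t}}"
  define g2 where "g2 = g({u, v} := cuv, {x, u} := cux, {x, w} := cwx, {v, w} := cvw, {w, y} := cwy,
     {v, y} := cvy, {v, z} := cvz, {z, t} := czt, {v, t} := cvt)"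
  have g2v: "g2 {u, v} = cuv" "g2 {x, u} = cux" "g2 {x, w} = cwx" "g2 {v, w} = cvw" "g2 {w, y} = cwy"
    "g2 {v, y} = cvy" "g2 {v, z} = cvz" "g2 {z, t} = czt" "g2 {v, t} = cvt"
    unfolding g2_def using neq by (simp_all add: doubleton_eq_iff)
  have g2o: "\<And>e. e \<notin> L \<Longrightarrow> g2 e = g e" unfolding g2_def L_def by simp
  have zsL: "{z, s} \<notin> L" unfolding L_def using neq by (simp add: doubleton_eq_iff)
  have g2zs: "g2 {z, s} = g {z, s}" using g2o zsL by blast
  have Lsub: "\<And>e p. e \<in> L \<Longrightarrow> p \<in> e \<Longrightarrow> p \<in> {u, v, w, x, y, z, t}" unfolding L_def by auto
  obtain fu where fu9: "fu \<in> {1..9}" and fu: "fu \<notin> set [f v, f x, cuv, cux]"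
    using ex_free_list[of "[f v, f x, cuv, cux]"] by auto
  obtain fw where fw9: "fw \<in> {1..9}" and fw: "fw \<notin> set [f v, f x, f y, cvw, cwx, cwy]"
    using ex_free_list[of "[f v, f x, f y, cvw, cwx, cwy]"] by auto
  obtain fz where fz9: "fz \<in> {1..9}" and fz: "fz \<notin> set [f v, f t, f s, cvz, czt, g {z, s}]"
    using ex_free_list[of "[f v, f t, f s, cvz, czt, g {z, s}]"] by auto
  define f2 where "f2 = f(u := fu, w := fw, z := fz)"
  have f2v: "f2 u = fu" "f2 w = fw" "f2 z = fz" unfolding f2_def using neq by simp_all
  have f2o: "\<And>p. p \<notin> {u, w, z} \<Longrightarrow> f2 p = f p" unfolding f2_def by simp
  have f2n: "f2 v = f v" "f2 x = f x" "f2 y = f y" "f2 t = f t" "f2 s = f s"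
    using f2o neq by auto
  have gE'9: "\<And>e. e \<in> E' \<Longrightarrow> g e \<in> {1..9}" using tcg by blast
  have cr1: "set [cuv, cvw, cvy, cvz, cvt] \<subseteq> {1..9}"
    using C2 gE'9[OF E'vw] gE'9[OF E'vy] gE'9[OF E'vz] gE'9[OF E'vt] m9 by auto
  have cr2: "cux \<in> {1..9}" "cwx \<in> {1..9}" using C6 gE'9[OF E'xu] gE'9[OF E'xw] by (metis insertCI insertE singletonD)+
  have cr3: "cwy \<in> {1..9}" using C7 gE'9[OF E'vy] gE'9[OF E'wy] by (metis insertCI insertE singletonD)
  have cr4: "czt \<in> {1..9}" using C8 gE'9[OF E'vt] gE'9[OF E'zt] by (metis insertCI insertE singletonD)
  have ranges_g: "\<forall>e\<in>E. g2 e \<in> {1..9}"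
  proof
    fix e assume eE: "e \<in> E"
    show "g2 e \<in> {1..9}"
    proof (cases "e \<in> L")
      case True
      then show ?thesis unfolding L_def using g2v cr1 cr2 cr3 cr4 by auto
    next
      case False
      then have "e \<noteq> {u, v}" unfolding L_def by auto
      then have "e \<in> E'" using eE unfolding E'_def by simp
      then show ?thesis using g2o[OF False] gE'9 by simp
    qed
  qed
  have ranges_f: "\<forall>p\<in>V. f2 p \<in> {1..9}"
  proof
    fix p assume "p \<in> V"
    then show "f2 p \<in> {1..9}" using tcf fu9 fw9 fz9 unfolding f2_def by auto
  qed
  have adjH: "\<And>p q. {p, q} \<in> E \<Longrightarrow> p \<in> {u, w, z} \<Longrightarrow> f2 p \<noteq> f2 q"
  proof -
    fix p q assume pq: "{p, q} \<in> E" "p \<in> {u, w, z}"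
    consider "p = u" | "p = w" | "p = z" using pq(2) by blast
    then show "f2 p \<noteq> f2 q"
    proof cases
      case 1
      then have "q = v \<or> q = x" using nbu pq(1) by simp
      then show ?thesis using 1 f2v f2n fu by auto
    next
      case 2
      then have "q = v \<or> q = x \<or> q = y" using nbw pq(1) by simp
      then show ?thesis using 2 f2v f2n fw by auto
    next
      case 3
      then have "q = v \<or> q = t \<or> q = s" using nbz pq(1) by simp
      then show ?thesis using 3 f2v f2n fz by auto
    qed
  qed
  have adjall: "\<forall>p\<in>V. \<forall>q\<in>V. adj E p q \<longrightarrow> f2 p \<noteq> f2 q"
  proof (intro ballI impI)
    fix p q assume pV: "p \<in> V" and qV: "q \<in> V" and pq: "adj E p q"
    have pqE: "{p, q} \<in> E" using pq unfolding adj_def .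
    show "f2 p \<noteq> f2 q"
    proof (cases "p \<in> {u, w, z}")
      case True then show ?thesis using adjH pqE by blast
    next
      case pn: False
      show ?thesis
      proof (cases "q \<in> {u, w, z}")
        case True
        have "{q, p} \<in> E" using pqE by (simp add: insert_commute)
        then show ?thesis using adjH True by metis
      next
        case qn: False
        have "p \<noteq> u" "q \<noteq> u" using pn qn by auto
        then have "{p, q} \<in> E'" using inE'[OF pqE] by blast
        then have "f p \<noteq> f q" using tca pV qV unfolding adj_def by blast
        then show ?thesis using f2o pn qn by simp
      qed
    qed
  qed
  have okE': "\<And>p. p \<in> V \<Longrightarrow> okS (star E' p) (f p) g" using tc_okS[OF tcE'] .
  have starEq: "\<And>p. p \<noteq> u \<Longrightarrow> p \<noteq> v \<Longrightarrow> star E p = star E' p"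
    unfolding star_def E'_def by auto
  have okall: "\<forall>p\<in>V. okS (star E p) (f2 p) g2"
  proof
    fix p assume pV: "p \<in> V"
    consider "p = u" | "p = w" | "p = z" | "p = v" | "p = x" | "p = y" | "p = t"
      | "p \<notin> {u, v, w, x, y, z, t}" by blast
    then show "okS (star E p) (f2 p) g2"
    proof cases
      case 1
      have "distinct (map g2 [{u, v}, {x, u}])" using g2v C3 by simp
      then have "inj_on g2 (set [{u, v}, {x, u}])" by (simp only: distinct_map)
      moreover have "\<forall>e\<in>set [{u, v}, {x, u}]. g2 e \<noteq> fu" using g2v fu by auto
      ultimately show ?thesis unfolding okS_def 1 Su f2v by simp
    next
      case 2
      have "distinct (map g2 [{v, w}, {x, w}, {w, y}])" using g2v C4 by simp
      then have "inj_on g2 (set [{v, w}, {x, w}, {w, y}])" by (simp only: distinct_map)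
      moreover have "\<forall>e\<in>set [{v, w}, {x, w}, {w, y}]. g2 e \<noteq> fw" using g2v fw by auto
      ultimately show ?thesis unfolding okS_def 2 Sw f2v by simp
    next
      case 3
      have "distinct (map g2 [{v, z}, {z, t}, {z, s}])" using g2v g2zs C5 by simp
      then have "inj_on g2 (set [{v, z}, {z, t}, {z, s}])" by (simp only: distinct_map)
      moreover have "\<forall>e\<in>set [{v, z}, {z, t}, {z, s}]. g2 e \<noteq> fz" using g2v g2zs fz by auto
      ultimately show ?thesis unfolding okS_def 3 Sz f2v by simp
    next
      case 4
      define D where "D = {{v, w}, {v, y}, {v, z}, {v, t}}"
      have S1: "star E v = insert {u, v} Sv'" using Sv'eq uvS by blast
      have DS: "D \<subseteq> Sv'" unfolding D_def Sv'_def star_def using E'facts by auto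
      have e0: "{u, v} \<notin> Sv'" unfolding Sv'_def star_def E'_def by simp
      have agree: "\<forall>e\<in>Sv' - D. g2 e = g e"
      proof
        fix e assume e: "e \<in> Sv' - D"
        then have "v \<in> e" "e \<noteq> {u, v}" unfolding Sv'_def star_def E'_def by auto
        then have "e \<notin> L" using e unfolding L_def D_def using neq by auto
        then show "g2 e = g e" by (rule g2o)
      qed
      have "distinct (map g2 [{u, v}, {v, w}, {v, y}, {v, z}, {v, t}])" using g2v C1 by simp
      then have inj: "inj_on g2 (insert {u, v} D)" unfolding D_def by (simp only: distinct_map list.set)
      have img: "g2 ` insert {u, v} D \<subseteq> g ` D \<union> {m}" unfolding D_def using g2v C2 by auto
      have mS: "m \<notin> g ` Sv'" using mF F_def by simp
      have "okS (insert {u, v} Sv') (f v) g2"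
        by (rule okS_v[OF okE'[OF vV, folded Sv'_def] DS e0 agree inj img mS mfv])
      then show ?thesis unfolding 4 S1 f2n .
    next
      case 5
      define D where "D = {{x, u}, {x, w}}"
      have DS: "D \<subseteq> star E' x" unfolding D_def star_def using E'facts by auto
      have agree: "\<forall>e\<in>star E' x - D. g2 e = g e"
      proof
        fix e assume e: "e \<in> star E' x - D"
        then have "x \<in> e" unfolding star_def by auto
        then have "e \<notin> L" using e unfolding L_def D_def using neq by auto
        then show "g2 e = g e" by (rule g2o)
      qed
      have "distinct (map g2 [{x, u}, {x, w}])" using g2v C6 P2 by (auto simp: doubleton_eq_iff)
      then have inj: "inj_on g2 D" unfolding D_def by (simp only: distinct_map list.set)
      have img: "g2 ` D = g ` D" unfolding D_def using g2v C6 by simp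
      have "okS (star E' x) (f x) g2" by (rule okS_perm[OF okE'[OF xV] DS agree inj img])
      then show ?thesis unfolding 5 using starEq[of x] neq f2n by simp
    next
      case 6
      define D where "D = {{v, y}, {w, y}}"
      have DS: "D \<subseteq> star E' y" unfolding D_def star_def using E'facts by auto
      have agree: "\<forall>e\<in>star E' y - D. g2 e = g e"
      proof
        fix e assume e: "e \<in> star E' y - D"
        then have "y \<in> e" unfolding star_def by auto
        then have "e \<notin> L" using e unfolding L_def D_def using neq by auto
        then show "g2 e = g e" by (rule g2o)
      qed
      have "distinct (map g2 [{v, y}, {w, y}])" using g2v C7 P4 by (auto simp: doubleton_eq_iff)
      then have inj: "inj_on g2 D" unfolding D_def by (simp only: distinct_map list.set)
      have img: "g2 ` D = g ` D" unfolding D_def using g2v C7 by simp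
      have "okS (star E' y) (f y) g2" by (rule okS_perm[OF okE'[OF yV] DS agree inj img])
      then show ?thesis unfolding 6 using starEq[of y] neq f2n by simp
    next
      case 7
      define D where "D = {{v, t}, {z, t}}"
      have DS: "D \<subseteq> star E' t" unfolding D_def star_def using E'facts by auto
      have agree: "\<forall>e\<in>star E' t - D. g2 e = g e"
      proof
        fix e assume e: "e \<in> star E' t - D"
        then have "t \<in> e" unfolding star_def by auto
        then have "e \<notin> L" using e unfolding L_def D_def using neq by auto
        then show "g2 e = g e" by (rule g2o)
      qed
      have "distinct (map g2 [{v, t}, {z, t}])" using g2v C8 P6 by (auto simp: doubleton_eq_iff)
      then have inj: "inj_on g2 D" unfolding D_def by (simp only: distinct_map list.set)
      have img: "g2 ` D = g ` D" unfolding D_def using g2v C8 by simp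
      have "okS (star E' t) (f t) g2" by (rule okS_perm[OF okE'[OF tV] DS agree inj img])
      then show ?thesis unfolding 7 using starEq[of t] neq f2n by simp
    next
      case 8
      have agree: "\<forall>e\<in>star E' p - {}. g2 e = g e"
      proof
        fix e assume e: "e \<in> star E' p - {}"
        then have "p \<in> e" unfolding star_def by auto
        then have "e \<notin> L" using Lsub 8 by blast
        then show "g2 e = g e" by (rule g2o)
      qed
      have "okS (star E' p) (f p) g2" by (rule okS_perm[OF okE'[OF pV] _ agree]) simp_all
      moreover have "star E p = star E' p" using starEq 8 by simp
      moreover have "f2 p = f p" using f2o 8 by simp
      ultimately show ?thesis by simp
    qed
  qed
  have "total_coloring V E 9 f2 g2" by (rule okS_tc[OF sg ranges_f ranges_g adjall okall])
  then show ?thesis unfolding total_colorable_def by blast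
qed
theorem lemma2p14:
  fixes V :: "'a set" and E :: "'a set set"
  assumes "minimal_counterexample V E"
  shows "\<not> (\<exists>v u w y z t x. v \<in> V \<and> x \<in> V \<and> degree E v = 8 \<and>
            distinct [u, w, y, z, t] \<and>
            adj E v u \<and> adj E v w \<and> adj E v y \<and> adj E v z \<and> adj E v t \<and>
            x \<notin> {v, u, w, y, z, t} \<and>
            degree E u = 2 \<and> degree E w = 3 \<and> degree E z = 3 \<and>
            adj E x u \<and> adj E x w \<and> adj E w y \<and> adj E z t)"
proof
  assume "\<exists>v u w y z t x. v \<in> V \<and> x \<in> V \<and> degree E v = 8 \<and>
            distinct [u, w, y, z, t] \<and>
            adj E v u \<and> adj E v w \<and> adj E v y \<and> adj E v z \<and> adj E v t \<and>
            x \<notin> {v, u, w, y, z, t} \<and>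
            degree E u = 2 \<and> degree E w = 3 \<and> degree E z = 3 \<and>
            adj E x u \<and> adj E x w \<and> adj E w y \<and> adj E z t"
  then obtain v u w y z t x where vV: "v \<in> V" and xV: "x \<in> V" and dv: "degree E v = 8"
    and dis: "distinct [u, w, y, z, t]"
    and a1: "adj E v u" and a2: "adj E v w" and a3: "adj E v y" and a4: "adj E v z" and a5: "adj E v t"
    and xn: "x \<notin> {v, u, w, y, z, t}"
    and du: "degree E u = 2" and dw: "degree E w = 3" and dz: "degree E z = 3"
    and a6: "adj E x u" and a7: "adj E x w" and a8: "adj E w y" and a9: "adj E z t"
    by (elim exE conjE)
  note mc = assms[unfolded minimal_counterexample_def]
  have sg: "simple_graph V E" using mc by (elim conjE)
  have pl: "planar V E" using mc by (elim conjE)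
  have mde: "max_degree_eq V E 8" using mc by (elim conjE)
  have nf: "\<not> has_4fan V E" using mc by (elim conjE)
  have ntc: "\<not> total_colorable V E 9" using mc by (elim conjE)
  have minH: "\<forall>(VH :: nat set) EH. simple_graph VH EH \<and> planar VH EH \<and> max_degree_le VH EH 8 \<and>
        \<not> has_4fan VH EH \<and> card VH + card EH < card V + card E \<longrightarrow> total_colorable VH EH 9"
    using mc by (elim conjE)
  define E' where "E' = E - {{u, v}}"
  have E'E: "E' \<subseteq> E" unfolding E'_def by blast
  have finV: "finite V" using sg unfolding simple_graph_def by blast
  have finE: "finite E"
  proof (rule finite_subset[of E "Pow V"])
    show "E \<subseteq> Pow V" using sg unfolding simple_graph_def by blast
    show "finite (Pow V)" using finV by simp
  qed
  have sg': "simple_graph V E'" using sg E'E unfolding simple_graph_def by blast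
  have pl': "planar V E'"
  proof -
    obtain p :: "'a \<Rightarrow> complex" and \<gamma> :: "'a set \<Rightarrow> real \<Rightarrow> complex" where
      p1: "inj_on p V" and
      p2: "\<forall>e\<in>E. arc (\<gamma> e) \<and> {pathstart (\<gamma> e), pathfinish (\<gamma> e)} = p ` e \<and>
               path_image (\<gamma> e) \<inter> p ` V = p ` e" and
      p3: "\<forall>e\<in>E. \<forall>e'\<in>E. e \<noteq> e' \<longrightarrow> path_image (\<gamma> e) \<inter> path_image (\<gamma> e') \<subseteq> p ` (e \<inter> e')"
      using pl unfolding planar_def by (elim exE conjE) (rule that)
    have q2: "\<forall>e\<in>E'. arc (\<gamma> e) \<and> {pathstart (\<gamma> e), pathfinish (\<gamma> e)} = p ` e \<and>
               path_image (\<gamma> e) \<inter> p ` V = p ` e" using p2 E'E by blast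
    have q3: "\<forall>e\<in>E'. \<forall>e'\<in>E'. e \<noteq> e' \<longrightarrow> path_image (\<gamma> e) \<inter> path_image (\<gamma> e') \<subseteq> p ` (e \<inter> e')"
      using p3 E'E by blast
    show ?thesis unfolding planar_def
      by (rule exI[of _ p], rule exI[of _ \<gamma>], rule conjI[OF p1 conjI[OF q2 q3]])
  qed
  have md': "max_degree_le V E' 8"
    unfolding max_degree_le_def
  proof
    fix p assume pV: "p \<in> V"
    have "{e \<in> E'. p \<in> e} \<subseteq> {e \<in> E. p \<in> e}" using E'E by blast
    moreover have "finite {e \<in> E. p \<in> e}" using finE by simp
    ultimately have "degree E' p \<le> degree E p" unfolding degree_def by (rule card_mono[rotated])
    moreover have "degree E p \<le> 8" using mde pV unfolding max_degree_eq_def max_degree_le_def by blast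
    ultimately show "degree E' p \<le> 8" by simp
  qed
  have nf': "\<not> has_4fan V E'"
  proof
    assume "has_4fan V E'"
    moreover have "\<And>a b. adj E' a b \<Longrightarrow> adj E a b" using E'E unfolding adj_def by blast
    ultimately have "has_4fan V E" unfolding has_4fan_def by meson
    then show False using nf by simp
  qed
  have uvE: "{u, v} \<in> E" using a1 unfolding adj_def by (simp add: insert_commute)
  have "card E' < card E" unfolding E'_def using finE uvE by (rule card_Diff1_less)
  then have lt: "card V + card E' < card V + card E" by simp
  have "total_colorable V E' 9" by (rule transport[OF sg' pl' md' nf' minH lt])
  then obtain f g where tcf: "total_coloring V E' 9 f g" unfolding total_colorable_def by blast
  have "total_colorable V E 9"
    by (rule extend[OF sg vV dv dis a1 a2 a3 a4 a5 xn du dw dz a6 a7 a8 a9 tcf[unfolded E'_def]])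
  then show False using ntc by simp
qed
end
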